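(* Let $R$ be a commutative multiplicative hyperring with identity, let $\alpha$ be a good endomorphism of $R$, and let $I$ be an $\alpha$-prime hyperideal of $R$. Then the prime radical $\sqrt{I}$ is an $\alpha$-prime hyperideal of $R$.
   Context: A multiplicative hyperring is an abelian group $(R,+)$ with a hyperoperation $\circ:R\times R\to \mathcal P^*(R)$ (nonempty subsets) such that $a\circ(b\circ c)=(a\circ b)\circ c$, $a\circ(b+c)\subseteq a\circ b+a\circ c$, $(b+c)\circ a\subseteq b\circ a+c\circ a$, and $a\circ(-b)=(-a)\circ b=-(a\circ b)$. Products of subsets are unions of elementwise products. Commutative means $a\circ b=b\circ a$. An identity $1$ satisfies $a\in1\circ a$ for all $a$. A hyperideal is a nonempty $I\subseteq R$ closed under subtraction with $r\circ x\subseteq I$ for $r\in R$, $x\in I$. Standing assumption: every hyperideal is a $\mathbf C$-hyperideal, i.e. for every finite product $A=r_1\circ\cdots\circ r_n$, $A\cap I\neq\emptyset$ implies $A\subseteq I$. A prime hyperideal is a proper hyperideal $P$ with $x\circ y\subseteq P\Rightarrow x\in P$ or $y\in P$. The prime radical $\sqrt I$ is the intersection of all prime hyperideals containing $I$, and equals $R$ if there are none. For $\mathbf C$-hyperideals, $\sqrt I=\{r: r^n\subseteq I \text{ for some } n\in\mathbb N\}$, where $r^n=r\circ\cdots\circ r$ ($n$ factors). A good endomorphism $\alpha$ satisfies $\alpha(x+y)=\alpha(x)+\alpha(y)$ and $\alpha(x\circ y)=\alpha(x)\circ\alpha(y)$. A hyperideal $I$ is $\alpha$-prime if for all $x,y$,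 $x\circ y\subseteq I$ implies $x\in I$ or $\alpha(y)\in I$. *)

theory Defs
  imports Main
begin

text \<open>A multiplicative hyperring: the additive abelian group is the type 'a itself
  (class ab_group_add), the hyperoperation is M :: 'a => 'a => 'a set.\<close>

definition setmult :: "('a \<Rightarrow> 'a \<Rightarrow> 'a set) \<Rightarrow> 'a set \<Rightarrow> 'a set \<Rightarrow> 'a set" where
  "setmult M A B = (\<Union>a\<in>A. \<Union>b\<in>B. M a b)"

definition setplus :: "'a::plus set \<Rightarrow> 'a set \<Rightarrow> 'a set" where
  "setplus A B = {a + b | a b. a \<in> A \<and> b \<in> B}"

definition mult_hyperring :: "('a::ab_group_add \<Rightarrow> 'a \<Rightarrow> 'a set) \<Rightarrow> bool" where
  "mult_hyperring M \<longleftrightarrow>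
     (\<forall>a b. M a b \<noteq> {}) \<and>
     (\<forall>a b c. setmult M {a} (M b c) = setmult M (M a b) {c}) \<and>
     (\<forall>a b c. M a (b + c) \<subseteq> setplus (M a b) (M a c)) \<and>
     (\<forall>a b c. M (b + c) a \<subseteq> setplus (M b a) (M c a)) \<and>
     (\<forall>a b. M a (- b) = uminus ` (M a b) \<and> M (- a) b = uminus ` (M a b))"

definition hcomm :: "('a \<Rightarrow> 'a \<Rightarrow> 'a set) \<Rightarrow> bool" where
  "hcomm M \<longleftrightarrow> (\<forall>a b. M a b = M b a)"

definition has_identity :: "('a \<Rightarrow> 'a \<Rightarrow> 'a set) \<Rightarrow> bool" where
  "has_identity M \<longleftrightarrow> (\<exists>e. \<forall>a. a \<in> M e a)"

text \<open>Finite product r1 o ... o rn of a nonempty list (right-nested; equal to any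
  bracketing by associativity).\<close>
fun hprod :: "('a \<Rightarrow> 'a \<Rightarrow> 'a set) \<Rightarrow> 'a list \<Rightarrow> 'a set" where
  "hprod M [] = {}"
| "hprod M [x] = {x}"
| "hprod M (x # y # xs) = setmult M {x} (hprod M (y # xs))"

definition hyperideal :: "('a::ab_group_add \<Rightarrow> 'a \<Rightarrow> 'a set) \<Rightarrow> 'a set \<Rightarrow> bool" where
  "hyperideal M I \<longleftrightarrow> I \<noteq> {} \<and> (\<forall>x\<in>I. \<forall>y\<in>I. x - y \<in> I) \<and>
     (\<forall>r. \<forall>x\<in>I. M r x \<subseteq> I)"

definition C_hyperideal :: "('a::ab_group_add \<Rightarrow> 'a \<Rightarrow> 'a set) \<Rightarrow> 'a set \<Rightarrow> bool" where
  "C_hyperideal M I \<longleftrightarrow> hyperideal M I \<and>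
     (\<forall>rs. rs \<noteq> [] \<longrightarrow> hprod M rs \<inter> I \<noteq> {} \<longrightarrow> hprod M rs \<subseteq> I)"

definition prime_hyperideal :: "('a::ab_group_add \<Rightarrow> 'a \<Rightarrow> 'a set) \<Rightarrow> 'a set \<Rightarrow> bool" where
  "prime_hyperideal M P \<longleftrightarrow> hyperideal M P \<and> P \<noteq> UNIV \<and>
     (\<forall>x y. M x y \<subseteq> P \<longrightarrow> x \<in> P \<or> y \<in> P)"

text \<open>Prime radical: intersection of all prime hyperideals containing I
  (the empty intersection is UNIV = R).\<close>
definition prime_radical :: "('a::ab_group_add \<Rightarrow> 'a \<Rightarrow> 'a set) \<Rightarrow> 'a set \<Rightarrow> 'a set" where
  "prime_radical M I = \<Inter>{P. prime_hyperideal M P \<and> I \<subseteq> P}"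

definition good_endo :: "('a::plus \<Rightarrow> 'a \<Rightarrow> 'a set) \<Rightarrow> ('a \<Rightarrow> 'a) \<Rightarrow> bool" where
  "good_endo M \<alpha> \<longleftrightarrow> (\<forall>x y. \<alpha> (x + y) = \<alpha> x + \<alpha> y) \<and>
     (\<forall>x y. \<alpha> ` (M x y) = M (\<alpha> x) (\<alpha> y))"

definition alpha_prime :: "('a::ab_group_add \<Rightarrow> 'a \<Rightarrow> 'a set) \<Rightarrow> ('a \<Rightarrow> 'a) \<Rightarrow> 'a set \<Rightarrow> bool" where
  "alpha_prime M \<alpha> I \<longleftrightarrow> hyperideal M I \<and>
     (\<forall>x y. M x y \<subseteq> I \<longrightarrow> x \<in> I \<or> \<alpha> y \<in> I)"

end

theory Submission
  imports Defs
begin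

fun pw :: "('a \<Rightarrow> 'a \<Rightarrow> 'a set) \<Rightarrow> 'a \<Rightarrow> nat \<Rightarrow> 'a set" where
  "pw M z 0 = {z}"
| "pw M z (Suc n) = setmult M {z} (pw M z n)"

inductive_set gen :: "('a::ab_group_add \<Rightarrow> 'a \<Rightarrow> 'a set) \<Rightarrow> 'a set \<Rightarrow> 'a \<Rightarrow> 'a set"
  for M P a where
  base: "p \<in> P \<Longrightarrow> p \<in> gen M P a"
| self: "a \<in> gen M P a"
| diff: "s \<in> gen M P a \<Longrightarrow> t \<in> gen M P a \<Longrightarrow> s - t \<in> gen M P a"
| mul: "s \<in> gen M P a \<Longrightarrow> u \<in> M r s \<Longrightarrow> u \<in> gen M P a"

lemma mh_nonempty: "mult_hyperring M \<Longrightarrow> M a b \<noteq> {}"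
  unfolding mult_hyperring_def by (drule conjunct1) simp
lemma mh_assoc: "mult_hyperring M \<Longrightarrow> setmult M {a} (M b c) = setmult M (M a b) {c}"
  unfolding mult_hyperring_def by (drule conjunct2, drule conjunct1) simp
lemma mh_distl: "mult_hyperring M \<Longrightarrow> M a (b + c) \<subseteq> setplus (M a b) (M a c)"
  unfolding mult_hyperring_def by (drule conjunct2, drule conjunct2, drule conjunct1) simp
lemma mh_distr: "mult_hyperring M \<Longrightarrow> M (b + c) a \<subseteq> setplus (M b a) (M c a)"
  unfolding mult_hyperring_def by (drule conjunct2, drule conjunct2, drule conjunct2, drule conjunct1) simp
lemma mh_neg: "mult_hyperring M \<Longrightarrow> M a (- b) = uminus ` (M a b) \<and> M (- a) b = uminus ` (M a b)"
  unfolding mult_hyperring_def by (drule conjunct2, drule conjunct2, drule conjunct2, drule conjunct2) simp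

lemma hprod2: "hprod M [a, b] = M a b"
  by (simp add: setmult_def)

lemma C_sub: "C_hyperideal M J \<Longrightarrow> M a b \<inter> J \<noteq> {} \<Longrightarrow> M a b \<subseteq> J"
proof -
  assume C: "C_hyperideal M J" and m: "M a b \<inter> J \<noteq> {}"
  have "\<forall>rs. rs \<noteq> [] \<longrightarrow> hprod M rs \<inter> J \<noteq> {} \<longrightarrow> hprod M rs \<subseteq> J"
    using C unfolding C_hyperideal_def by (rule conjunct2)
  then have "[a,b] \<noteq> [] \<longrightarrow> hprod M [a,b] \<inter> J \<noteq> {} \<longrightarrow> hprod M [a,b] \<subseteq> J" by (rule spec)
  then show ?thesis using m by (simp only: hprod2) simp
qed
lemma prime_elem: "prime_hyperideal M P \<Longrightarrow> M x y \<subseteq> P \<Longrightarrow> x \<in> P \<or> y \<in> P"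
  unfolding prime_hyperideal_def by (drule conjunct2, drule conjunct2) simp
lemma prime_hid: "prime_hyperideal M P \<Longrightarrow> hyperideal M P"
  unfolding prime_hyperideal_def by (rule conjunct1)

lemma hc: "hcomm M \<Longrightarrow> M a b = M b a"
  unfolding hcomm_def by (erule allE)+

lemma ge_mult: "good_endo M \<alpha> \<Longrightarrow> \<alpha> ` M x y = M (\<alpha> x) (\<alpha> y)"
  unfolding good_endo_def by (drule conjunct2) simp

lemma ap_hid: "alpha_prime M \<alpha> I \<Longrightarrow> hyperideal M I"
  unfolding alpha_prime_def by (rule conjunct1)

lemma ap_elem: "alpha_prime M \<alpha> I \<Longrightarrow> M x y \<subseteq> I \<Longrightarrow> x \<in> I \<or> \<alpha> y \<in> I"
  unfolding alpha_prime_def by (drule conjunct2) simp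

lemma ap_intro: "hyperideal M I \<Longrightarrow> (\<And>x y. M x y \<subseteq> I \<Longrightarrow> x \<notin> I \<Longrightarrow> \<alpha> y \<in> I) \<Longrightarrow> alpha_prime M \<alpha> I"
  unfolding alpha_prime_def by blast

lemma hid_zero: "hyperideal M J \<Longrightarrow> 0 \<in> J"
  unfolding hyperideal_def by (metis all_not_in_conv diff_self)

lemma hid_neg: "hyperideal M J \<Longrightarrow> x \<in> J \<Longrightarrow> - x \<in> J"
  using hid_zero[of M J] unfolding hyperideal_def by (metis diff_0)

lemma hid_add: "hyperideal M J \<Longrightarrow> x \<in> J \<Longrightarrow> y \<in> J \<Longrightarrow> x + y \<in> J"
  using hid_neg[of M J y] unfolding hyperideal_def by (metis diff_minus_eq_add)

lemma hid_diff: "hyperideal M J \<Longrightarrow> x \<in> J \<Longrightarrow> y \<in> J \<Longrightarrow> x - y \<in> J"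
  unfolding hyperideal_def by blast

lemma hid_mul: "hyperideal M J \<Longrightarrow> x \<in> J \<Longrightarrow> w \<in> M r x \<Longrightarrow> w \<in> J"
  unfolding hyperideal_def by blast

lemma assoc1:
  assumes "mult_hyperring M" "w \<in> M u v" "u \<in> M a b"
  shows "\<exists>e\<in>M b v. w \<in> M a e"
proof -
  have "setmult M {a} (M b v) = setmult M (M a b) {v}"
    using mh_assoc[OF assms(1)] by simp
  moreover have "w \<in> setmult M (M a b) {v}" using assms(2,3) unfolding setmult_def by auto
  ultimately have "w \<in> setmult M {a} (M b v)" by simp
  then show ?thesis by (simp add: setmult_def)
qed

lemma assoc2:
  assumes "mult_hyperring M" "w \<in> M a e" "e \<in> M b c"
  shows "\<exists>d\<in>M a b. w \<in> M d c"
proof -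
  have "setmult M {a} (M b c) = setmult M (M a b) {c}"
    using mh_assoc[OF assms(1)] by simp
  moreover have "w \<in> setmult M {a} (M b c)" using assms(2,3) unfolding setmult_def by auto
  ultimately have "w \<in> setmult M (M a b) {c}" by simp
  then show ?thesis by (simp add: setmult_def)
qed

lemma pw_Suc_mem: "w \<in> pw M z (Suc n) \<longleftrightarrow> (\<exists>u\<in>pw M z n. w \<in> M z u)"
  by (auto simp: setmult_def)


lemma pw_mult:
  assumes "mult_hyperring M" 
  shows "u \<in> pw M z m \<Longrightarrow> v \<in> pw M z n \<Longrightarrow> w \<in> M u v \<Longrightarrow> w \<in> pw M z (Suc (m + n))"
proof (induction m arbitrary: u w)
  case 0
  then show ?case by (auto simp: setmult_def)
next
  case (Suc m)
  then obtain w' where w': "w' \<in> pw M z m" "u \<in> M z w'" using pw_Suc_mem by metis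
  then obtain e where e: "e \<in> M w' v" "w \<in> M z e" using assoc1[OF assms Suc.prems(3)] by blast
  have "e \<in> pw M z (Suc (m + n))" using Suc.IH[OF w'(1) Suc.prems(2) e(1)] .
  then show ?case using e(2) pw_Suc_mem by (metis add_Suc)
qed

lemma pw_prod:
  assumes "mult_hyperring M" "hcomm M" "z \<in> M x y"
  shows "w \<in> pw M z k \<Longrightarrow> \<exists>a\<in>pw M x k. \<exists>b\<in>pw M y k. w \<in> M a b"
proof (induction k arbitrary: w)
  case 0
  then show ?case using assms by auto
next
  case (Suc k)
  then obtain w' where w': "w' \<in> pw M z k" "w \<in> M z w'" using pw_Suc_mem by metis
  then obtain a b where ab: "a \<in> pw M x k" "b \<in> pw M y k" "w' \<in> M a b" using Suc.IH by blast
  obtain c where c: "c \<in> M z a" "w \<in> M c b" using assoc2[OF assms(1) w'(2) ab(3)] by blast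
  obtain e where e: "e \<in> M y a" "c \<in> M x e" using assoc1[OF assms(1) c(1) assms(3)] by blast
  have e': "e \<in> M a y" using e(1) hc[OF assms(2)] by simp
  obtain d where d: "d \<in> M x a" "c \<in> M d y" using assoc2[OF assms(1) e(2) e'] by blast
  obtain f where f: "f \<in> M y b" "w \<in> M d f" using assoc1[OF assms(1) c(2) d(2)] by blast
  have "d \<in> pw M x (Suc k)" using d(1) ab(1) pw_Suc_mem by metis
  moreover have "f \<in> pw M y (Suc k)" using f(1) ab(2) pw_Suc_mem by metis
  ultimately show ?case using f(2) by blast
qed

lemma pw_alpha:
  assumes "good_endo M \<alpha>"
  shows "b \<in> pw M y k \<Longrightarrow> \<alpha> b \<in> pw M (\<alpha> y) k"
proof (induction k arbitrary: b)
  case 0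
  then show ?case by auto
next
  case (Suc k)
  then obtain b' where b': "b' \<in> pw M y k" "b \<in> M y b'" using pw_Suc_mem by metis
  have "\<alpha> b \<in> M (\<alpha> y) (\<alpha> b')" using b'(2) ge_mult[OF assms] by blast
  then show ?case using Suc.IH[OF b'(1)] pw_Suc_mem by metis
qed

lemma prime_pw:
  assumes "prime_hyperideal M P" "C_hyperideal M P"
  shows "pw M z n \<inter> P \<noteq> {} \<Longrightarrow> z \<in> P"
proof (induction n)
  case 0
  then show ?case by auto
next
  case (Suc n)
  from Suc.prems obtain w where w1: "w \<in> pw M z (Suc n)" "w \<in> P" by blast
  from w1(1) obtain u where "u \<in> pw M z n" "w \<in> M z u" unfolding pw_Suc_mem by blast
  with w1 have wu: "w \<in> P" "u \<in> pw M z n" "w \<in> M z u" by auto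
  have "M z u \<subseteq> P" using C_sub[OF assms(2)] wu by blast
  then have "z \<in> P \<or> u \<in> P" using prime_elem[OF assms(1)] by blast
  then show ?case using Suc.IH wu(2) by blast
qed

lemma gen_hyperideal: "hyperideal M (gen M P a)"
  unfolding hyperideal_def by (auto intro: gen.intros)

lemma neg_image_sub:
  assumes "mult_hyperring M" "hyperideal M P" "M s1 b \<subseteq> P" "M s2 b \<subseteq> P"
  shows "M (s1 - s2) b \<subseteq> P"
proof -
  have "M (s1 + - s2) b \<subseteq> setplus (M s1 b) (M (- s2) b)"
    by (rule mh_distr[OF assms(1)])
  moreover have "M (- s2) b = uminus ` M s2 b"
    using mh_neg[OF assms(1)] by simp
  ultimately have "M (s1 - s2) b \<subseteq> setplus (M s1 b) (uminus ` M s2 b)" by simp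
  moreover have "setplus (M s1 b) (uminus ` M s2 b) \<subseteq> P"
    unfolding setplus_def using assms(2-4) hid_add hid_neg by blast
  ultimately show ?thesis by blast
qed

lemma neg_image_sub2:
  assumes "mult_hyperring M" "hyperideal M P" "M b s1 \<subseteq> P" "M b s2 \<subseteq> P"
  shows "M b (s1 - s2) \<subseteq> P"
proof -
  have "M b (s1 + - s2) \<subseteq> setplus (M b s1) (M b (- s2))"
    by (rule mh_distl[OF assms(1)])
  moreover have "M b (- s2) = uminus ` M b s2"
    using mh_neg[OF assms(1)] by simp
  ultimately have "M b (s1 - s2) \<subseteq> setplus (M b s1) (uminus ` M b s2)" by simp
  moreover have "setplus (M b s1) (uminus ` M b s2) \<subseteq> P"
    unfolding setplus_def using assms(2-4) hid_add hid_neg by blast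
  ultimately show ?thesis by blast
qed

lemma gen_key1:
  assumes "mult_hyperring M" "hcomm M" "hyperideal M P" "M a b \<subseteq> P"
  shows "s \<in> gen M P a \<Longrightarrow> M s b \<subseteq> P"
proof (induction rule: gen.induct)
  case (base p)
  have "M b p \<subseteq> P" using hid_mul[OF assms(3) base] by blast
  then show ?case using hc[OF assms(2), of p b] by simp
next
  case self
  then show ?case using assms(4) .
next
  case (diff s t)
  show ?case by (rule neg_image_sub[OF assms(1,3) diff.IH(1) diff.IH(2)])
next
  case (mul s u r)
  show ?case
  proof
    fix w assume w: "w \<in> M u b"
    obtain e where e: "e \<in> M s b" "w \<in> M r e" using assoc1[OF assms(1) w mul.hyps(2)] by blast
    have "e \<in> P" using mul.IH e(1) by blast
    then show "w \<in> P" using hid_mul[OF assms(3)] e(2) by blast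
  qed
qed

lemma gen_key:
  assumes "mult_hyperring M" "hcomm M" "hyperideal M P" "M a b \<subseteq> P"
  shows "t \<in> gen M P b \<Longrightarrow> \<forall>s \<in> gen M P a. M s t \<subseteq> P"
proof (induction rule: gen.induct)
  case (base p)
  show ?case using hid_mul[OF assms(3) base] by blast
next
  case self
  show ?case using gen_key1[OF assms] by blast
next
  case (diff t1 t2)
  show ?case
  proof
    fix s assume s: "s \<in> gen M P a"
    have "M s t1 \<subseteq> P" "M s t2 \<subseteq> P" using diff.IH s by blast+
    then show "M s (t1 - t2) \<subseteq> P" by (rule neg_image_sub2[OF assms(1,3)])
  qed
next
  case (mul t u r)
  show ?case
  proof (intro ballI subsetI)
    fix s w assume s: "s \<in> gen M P a" and w: "w \<in> M s u"
    obtain d where d: "d \<in> M s r" "w \<in> M d t" using assoc2[OF assms(1) w mul.hyps(2)] by blast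
    have d': "d \<in> M r s" using d(1) hc[OF assms(2), of s r] by simp
    obtain e where e: "e \<in> M s t" "w \<in> M r e" using assoc1[OF assms(1) d(2) d'] by blast
    have "e \<in> P" using mul.IH s e(1) by blast
    then show "w \<in> P" using hid_mul[OF assms(3)] e(2) by blast
  qed
qed

lemma exists_prime:
  assumes "mult_hyperring M" "hcomm M" "hyperideal M I" "\<forall>n. pw M z n \<inter> I = {}"
  shows "\<exists>P. prime_hyperideal M P \<and> I \<subseteq> P \<and> z \<notin> P"
proof -
  define F where "F = {J. hyperideal M J \<and> I \<subseteq> J \<and> (\<forall>n. pw M z n \<inter> J = {})}"
  have Fne: "F \<noteq> {}" using assms(3,4) unfolding F_def by blast
  have chain: "\<Union>C \<in> F" if "C \<noteq> {}" "subset.chain F C" for C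
  proof -
    have CF: "C \<subseteq> F" and ch: "\<forall>X\<in>C. \<forall>Y\<in>C. X \<subseteq> Y \<or> Y \<subseteq> X"
      using that(2) unfolding subset.chain_def by auto
    have hC: "hyperideal M X" if "X \<in> C" for X using that CF unfolding F_def by blast
    have hU: "hyperideal M (\<Union>C)"
      unfolding hyperideal_def
    proof (intro conjI ballI allI subsetI)
      obtain X where X: "X \<in> C" using \<open>C \<noteq> {}\<close> by blast
      then have "X \<noteq> {}" using hC unfolding hyperideal_def by blast
      then show "\<Union>C \<noteq> {}" using X by blast
    next
      fix x y assume "x \<in> \<Union>C" "y \<in> \<Union>C"
      then obtain X Y where XY: "X \<in> C" "Y \<in> C" "x \<in> X" "y \<in> Y" by blast
      show "x - y \<in> \<Union>C"
      proof (cases "X \<subseteq> Y")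
        case True
        then have "x - y \<in> Y" using hC[OF XY(2)] XY unfolding hyperideal_def by blast
        then show ?thesis using XY(2) by blast
      next
        case False
        then have "Y \<subseteq> X" using ch XY(1,2) by blast
        then have "x - y \<in> X" using hC[OF XY(1)] XY unfolding hyperideal_def by blast
        then show ?thesis using XY(1) by blast
      qed
    next
      fix r x w assume "x \<in> \<Union>C" "w \<in> M r x"
      then show "w \<in> \<Union>C" using hC unfolding hyperideal_def by blast
    qed
    have "I \<subseteq> \<Union>C" using CF \<open>C \<noteq> {}\<close> unfolding F_def by blast
    moreover have "\<forall>n. pw M z n \<inter> \<Union>C = {}" using CF unfolding F_def by blast
    ultimately show ?thesis using hU unfolding F_def by blast
  qed
  obtain P where P: "P \<in> F" and max: "\<forall>X\<in>F. P \<subseteq> X \<longrightarrow> X = P"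
    using subset_Zorn_nonempty[of F, OF Fne chain] by blast
  have hP: "hyperideal M P" and IP: "I \<subseteq> P" and dP: "\<forall>n. pw M z n \<inter> P = {}"
    using P unfolding F_def by auto
  have zP: "z \<notin> P" using dP[rule_format, of 0] by auto
  have meet: "\<exists>n u. u \<in> pw M z n \<and> u \<in> gen M P a" if "a \<notin> P" for a
  proof (rule ccontr)
    assume "\<not> ?thesis"
    then have d: "\<forall>n. pw M z n \<inter> gen M P a = {}" by blast
    have sub: "P \<subseteq> gen M P a" using gen.base[of _ P M a] by blast
    have "gen M P a \<in> F" using gen_hyperideal[of M P a] IP sub d
      unfolding F_def by blast
    then have "gen M P a = P" using max sub by blast
    then show False using that gen.self by blast
  qed
  have "prime_hyperideal M P"
    unfolding prime_hyperideal_def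
  proof (intro conjI allI impI hP)
    show "P \<noteq> UNIV" using zP by blast
  next
    fix a b assume ab: "M a b \<subseteq> P"
    show "a \<in> P \<or> b \<in> P"
    proof (rule ccontr)
      assume "\<not> (a \<in> P \<or> b \<in> P)"
      then obtain m u n v where uv: "u \<in> pw M z m" "u \<in> gen M P a" "v \<in> pw M z n" "v \<in> gen M P b"
        using meet by metis
      have "M u v \<subseteq> P" using gen_key[OF assms(1,2) hP ab uv(4)] uv(2) by blast
      moreover obtain w where "w \<in> M u v" using mh_nonempty[OF assms(1)] by blast
      ultimately show False using pw_mult[OF assms(1) uv(1,3)] dP by blast
    qed
  qed
  then show ?thesis using IP zP by blast
qed

theorem mainTheorem4:
  fixes M :: "'a::ab_group_add \<Rightarrow> 'a \<Rightarrow> 'a set"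
    and \<alpha> :: "'a \<Rightarrow> 'a"
    and I :: "'a set"
  assumes "mult_hyperring M"
    and "hcomm M"
    and "has_identity M"
    and "\<forall>J. hyperideal M J \<longrightarrow> C_hyperideal M J"
    and "good_endo M \<alpha>"
    and "alpha_prime M \<alpha> I"
  shows "alpha_prime M \<alpha> (prime_radical M I)"
proof -
  define R where "R = prime_radical M I"
  have hI: "hyperideal M I" using ap_hid[OF assms(6)] .
  have CI: "C_hyperideal M I" using assms(4) hI by blast
  have IR: "I \<subseteq> R" unfolding R_def prime_radical_def by blast
  have hR: "hyperideal M R"
    unfolding hyperideal_def
  proof (intro conjI ballI allI subsetI)
    show "R \<noteq> {}" using IR hI unfolding hyperideal_def by blast
  next
    fix x y assume xy: "x \<in> R" "y \<in> R"
    show "x - y \<in> R" unfolding R_def prime_radical_def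
    proof (rule InterI)
      fix P assume P: "P \<in> {P. prime_hyperideal M P \<and> I \<subseteq> P}"
      then have "x \<in> P" "y \<in> P" using xy unfolding R_def prime_radical_def by blast+
      then show "x - y \<in> P" using hid_diff[OF prime_hid] P by blast
    qed
  next
    fix r x w assume xw: "x \<in> R" "w \<in> M r x"
    show "w \<in> R" unfolding R_def prime_radical_def
    proof (rule InterI)
      fix P assume P: "P \<in> {P. prime_hyperideal M P \<and> I \<subseteq> P}"
      then have "x \<in> P" using xw unfolding R_def prime_radical_def by blast
      then show "w \<in> P" using hid_mul[OF prime_hid] P xw(2) by blast
    qed
  qed
  have radpow: "\<exists>k. pw M z k \<inter> I \<noteq> {}" if "z \<in> R" for z
  proof (rule ccontr)
    assume "\<not> ?thesis"
    then obtain P where "prime_hyperideal M P" "I \<subseteq> P" "z \<notin> P"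
      using exists_prime[OF assms(1,2) hI] by blast
    then show False using that unfolding R_def prime_radical_def by blast
  qed
  have powrad: "z \<in> R" if "pw M z k \<inter> I \<noteq> {}" for z k
    unfolding R_def prime_radical_def
  proof
    fix P assume "P \<in> {P. prime_hyperideal M P \<and> I \<subseteq> P}"
    then have "prime_hyperideal M P" "I \<subseteq> P" by auto
    moreover have "C_hyperideal M P" using assms(4) prime_hid[OF calculation(1)] by blast
    ultimately show "z \<in> P" using prime_pw[of M P z k] that by blast
  qed
  have "\<alpha> y \<in> R" if xy: "M x y \<subseteq> R" and xR: "x \<notin> R" for x y
  proof -
    obtain z where z: "z \<in> M x y" using mh_nonempty[OF assms(1)] by blast
    then obtain k w where w: "w \<in> pw M z k" "w \<in> I" using radpow xy by blast
    then obtain a b where ab: "a \<in> pw M x k" "b \<in> pw M y k" "w \<in> M a b"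
      using pw_prod[OF assms(1,2) z] by blast
    have "M a b \<subseteq> I" using C_sub[OF CI] ab(3) w(2) by blast
    then have "a \<in> I \<or> \<alpha> b \<in> I" using ap_elem[OF assms(6)] by blast
    moreover have "a \<notin> I" using powrad[of x k] ab(1) xR by blast
    ultimately have "\<alpha> b \<in> I" by blast
    then have "pw M (\<alpha> y) k \<inter> I \<noteq> {}" using pw_alpha[OF assms(5) ab(2)] by blast
    then show ?thesis using powrad by blast
  qed
  then show ?thesis using ap_intro[OF hR] unfolding R_def by blast
qed

end
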